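(* For $|q|<1$, \begin{align*} S_0(q^2)+2T_0(q^2)&=\frac{(q^2;q^2)_{\infty}\left[(q;q^2)^3_{\infty}+(-q;q^2)^3_{\infty}\right]}{2(-q^2;q^2)_{\infty}},\\ S_1(q^2)+2T_1(q^2)&=\frac{(q^2;q^2)_{\infty}\left[(-q;q^2)^3_{\infty}-(q;q^2)^3_{\infty}\right]}{2q(-q^2;q^2)_{\infty}}. \end{align*}
   Context: For $n\ge 0$, $(a;q)_n=\prod_{j=0}^{n-1}(1-aq^j)$, $(a;q)_\infty=\prod_{j\ge0}(1-aq^j)$. Eighth order mock theta functions: $S_0(q)=\sum_{n\ge0}\frac{q^{n^2}(-q;q^2)_n}{(-q^2;q^2)_n}$, $S_1(q)=\sum_{n\ge0}\frac{q^{n(n+2)}(-q;q^2)_n}{(-q^2;q^2)_n}$, $T_0(q)=\sum_{n\ge0}\frac{q^{(n+1)(n+2)}(-q^2;q^2)_n}{(-q;q^2)_{n+1}}$, $T_1(q)=\sum_{n\ge0}\frac{q^{n(n+1)}(-q^2;q^2)_n}{(-q;q^2)_{n+1}}$. *)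

theory Defs
  imports "HOL-Analysis.Analysis"
begin

definition qpoch :: "complex \<Rightarrow> complex \<Rightarrow> nat \<Rightarrow> complex" where
  "qpoch a q n = (\<Prod>j<n. 1 - a * q ^ j)"

definition qpoch_inf :: "complex \<Rightarrow> complex \<Rightarrow> complex" where
  "qpoch_inf a q = (\<Prod>j. 1 - a * q ^ j)"

definition S0 :: "complex \<Rightarrow> complex" where
  "S0 q = (\<Sum>n. q ^ (n^2) * qpoch (-q) (q^2) n / qpoch (-(q^2)) (q^2) n)"

definition S1 :: "complex \<Rightarrow> complex" where
  "S1 q = (\<Sum>n. q ^ (n*(n+2)) * qpoch (-q) (q^2) n / qpoch (-(q^2)) (q^2) n)"

definition T0 :: "complex \<Rightarrow> complex" where
  "T0 q = (\<Sum>n. q ^ ((n+1)*(n+2)) * qpoch (-(q^2)) (q^2) n / qpoch (-q) (q^2) (n+1))"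

definition T1 :: "complex \<Rightarrow> complex" where
  "T1 q = (\<Sum>n. q ^ (n*(n+1)) * qpoch (-(q^2)) (q^2) n / qpoch (-q) (q^2) (n+1))"

end

theory Submission
  imports Defs
begin


lemma qpoch_0 [simp]: "qpoch a q 0 = 1" by (simp add: qpoch_def)
lemma qpoch_Suc: "qpoch a q (Suc n) = qpoch a q n * (1 - a*q^n)"
  by (simp add: qpoch_def)

lemma qpoch_nz:
  assumes "\<And>j. 1 - a*q^j \<noteq> 0" shows "qpoch a q n \<noteq> 0"
  using assms by (simp add: qpoch_def)

lemma fac_nz:
  fixes a q :: complex
  assumes "norm a < 1" "norm q \<le> 1" shows "1 - a*q^j \<noteq> 0"
proof
  assume "1 - a*q^j = 0"
  hence "a*q^j = 1" by simp
  hence "norm a * norm q ^ j = 1" by (metis norm_mult norm_one norm_power)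
  moreover have "norm q ^ j \<le> 1" using assms by (simp add: power_le_one)
  moreover have "norm a * norm q ^ j \<le> norm a * 1"
    using calculation(2) by (intro mult_left_mono) auto
  ultimately show False using assms(1) by linarith
qed

lemma qpoch_conv:
  fixes a q :: complex
  assumes q: "norm q < 1" and nz: "\<And>j. 1 - a*q^j \<noteq> 0"
  shows "convergent_prod (\<lambda>j. 1 - a*q^j)"
proof -
  have "summable (\<lambda>j. norm (- a*q^j))"
    using q by (simp add: norm_mult norm_power summable_mult summable_geometric)
  moreover have "\<And>j. - a*q^j \<noteq> -1" using nz by (metis add.inverse_inverse diff_minus_eq_add eq_iff_diff_eq_0 minus_mult_left)
  ultimately have "convergent_prod (\<lambda>j. 1 + (- a*q^j))"
    by (rule summable_imp_convergent_prod_complex)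
  thus ?thesis by simp
qed

lemma qpoch_LIMSEQ:
  fixes a q :: complex
  assumes q: "norm q < 1" and nz: "\<And>j. 1 - a*q^j \<noteq> 0"
  shows "(\<lambda>n. qpoch a q n) \<longlonglongrightarrow> qpoch_inf a q"
proof -
  have "(\<lambda>n. \<Prod>i\<le>n. 1 - a*q^i) \<longlonglongrightarrow> qpoch_inf a q"
    unfolding qpoch_inf_def by (rule convergent_prod_LIMSEQ[OF qpoch_conv[OF q nz]])
  hence "(\<lambda>n. qpoch a q (Suc n)) \<longlonglongrightarrow> qpoch_inf a q"
    by (simp add: qpoch_def lessThan_Suc_atMost)
  thus ?thesis by (rule LIMSEQ_imp_Suc)
qed

lemma qpoch_inf_nz:
  fixes a q :: complex
  assumes q: "norm q < 1" and nz: "\<And>j. 1 - a*q^j \<noteq> 0"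
  shows "qpoch_inf a q \<noteq> 0"
  unfolding qpoch_inf_def by (rule prodinf_nonzero[OF qpoch_conv[OF q nz] nz])

lemma geom_bound:
  fixes r :: real assumes "0 \<le> r" "r < 1"
  shows "(\<Sum>j<n. r^j) \<le> 1/(1-r)"
proof -
  have "(\<Sum>j<n. r^j) = (1 - r^n)/(1-r)" using assms by (simp add: sum_gp_strict)
  also have "\<dots> \<le> 1/(1-r)" using assms by (intro divide_right_mono) auto
  finally show ?thesis .
qed

lemma qpoch_norm_le:
  fixes a q :: complex
  assumes q: "norm q < 1"
  shows "norm (qpoch a q n) \<le> exp (norm a / (1 - norm q))"
proof -
  have "norm (qpoch a q n) \<le> (\<Prod>j<n. norm (1 - a*q^j))"
    unfolding qpoch_def by (simp add: prod_norm)
  also have "\<dots> \<le> (\<Prod>j<n. exp (norm a * norm q ^ j))"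
  proof (rule prod_mono, safe)
    fix j
    have "norm (1 - a*q^j) \<le> 1 + norm a * norm q ^ j"
      by (metis norm_mult norm_one norm_power norm_triangle_ineq4)
    also have "\<dots> \<le> exp (norm a * norm q ^ j)" by (rule exp_ge_add_one_self)
    finally show "norm (1 - a*q^j) \<le> exp (norm a * norm q ^ j)" .
  qed simp
  also have "\<dots> = exp (norm a * (\<Sum>j<n. norm q ^ j))"
    by (simp add: exp_sum sum_distrib_left)
  also have "\<dots> \<le> exp (norm a * (1/(1 - norm q)))"
    using q by (intro exp_le_cancel_iff[THEN iffD2] mult_left_mono geom_bound) auto
  finally show ?thesis by simp
qed

lemma qpoch_inv_norm_le:
  fixes a q :: complex
  assumes q: "norm q < 1" and a: "norm a < 1"
  shows "norm (1 / qpoch a q n) \<le> exp (norm a / ((1 - norm a) * (1 - norm q)))"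
proof -
  have nz: "\<And>j. 1 - a*q^j \<noteq> 0" using fac_nz[OF a] q by simp
  have "norm (1 / qpoch a q n) = (\<Prod>j<n. 1 / norm (1 - a*q^j))"
    unfolding qpoch_def by (simp add: prod_norm prod_dividef norm_divide)
  also have "\<dots> \<le> (\<Prod>j<n. exp (norm a / (1 - norm a) * norm q ^ j))"
  proof (rule prod_mono, safe)
    fix j
    have t0: "norm a * norm q ^ j \<le> norm a" using q
      by (simp add: mult_left_le power_le_one)
    have "1 - norm a * norm q ^ j \<le> norm (1 - a*q^j)"
      by (metis norm_mult norm_one norm_power norm_triangle_ineq2)
    moreover have pos: "0 < 1 - norm a * norm q ^ j" using t0 a by linarith
    ultimately have "1 / norm (1 - a*q^j) \<le> 1 / (1 - norm a * norm q ^ j)"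
      by (intro divide_left_mono mult_pos_pos) auto
    also have "\<dots> = 1 + norm a * norm q ^ j / (1 - norm a * norm q ^ j)"
      using pos by (simp add: field_simps)
    also have "\<dots> \<le> 1 + norm a / (1 - norm a) * norm q ^ j"
    proof -
      have "norm a * norm q ^ j / (1 - norm a * norm q ^ j) \<le> norm a * norm q ^ j / (1 - norm a)"
        using pos t0 a by (intro divide_left_mono) auto
      thus ?thesis by simp
    qed
    also have "\<dots> \<le> exp (norm a / (1 - norm a) * norm q ^ j)" by (rule exp_ge_add_one_self)
    finally show "1 / norm (1 - a*q^j) \<le> exp (norm a / (1 - norm a) * norm q ^ j)" .
  qed simp
  also have "\<dots> = exp (norm a / (1 - norm a) * (\<Sum>j<n. norm q ^ j))"
    by (simp add: exp_sum sum_distrib_left)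
  also have "\<dots> \<le> exp (norm a / (1 - norm a) * (1/(1 - norm q)))"
    using q a by (intro exp_le_cancel_iff[THEN iffD2] mult_left_mono geom_bound) auto
  finally show ?thesis by simp
qed


lemma wz_poly:
  fixes x X u :: complex
  shows "((1-x^4*X^4)*(1-x^8*X^4)*u^2 - (u-x^2*X)*(1-x^2*X*u)*(u-x*X)*(1-x^3*X*u)*((1-x*X^2)*(1-x^3*X^2)))*(1-x*u^2)
   = (1+x^2*u^2)*(u-x^2*X)*(u-x*X)*(x^4*X^2*(1-x^3*X^2)*u^2 - x*(1+x)*X*(1-x^5*X^4)*u + x*X^2*(1-x^3*X^2))
     - (1+u^2)*(1-x^3*X*u)*(1-x^2*X*u)*(x^2*X^2*(1-x^3*X^2)*u^2 - x*(1+x)*X*(1-x^5*X^4)*u + x^3*X^2*(1-x^3*X^2))"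
  by algebra

definition Kn :: "complex \<Rightarrow> complex \<Rightarrow> complex \<Rightarrow> complex" where
 "Kn x X u = x^2*X^2*(1-x^3*X^2)*u^2 - x*(1+x)*X*(1-x^5*X^4)*u + x^3*X^2*(1-x^3*X^2)"
definition Dd :: "complex \<Rightarrow> complex \<Rightarrow> complex" where
 "Dd x X = (1-x^4*X^4)*(1-x^8*X^4)"
definition hh :: "complex \<Rightarrow> complex \<Rightarrow> complex \<Rightarrow> complex" where
 "hh x X u = (1+u^2)*(1-x^3*X*u)*(1-x^2*X*u)*Kn x X u / ((1-x*u^2)*u^2*Dd x X)"
definition Rr :: "complex \<Rightarrow> complex \<Rightarrow> complex \<Rightarrow> complex" where
 "Rr x X u = (1 - x^5*u^2)*(x^2*u^2)*(1 + x^2*u^2)*(u - x^2*X)*(u - x*X) / ((1-x*u^2)*(1+x^4*u^2)*(1-x^4*X*u)*(1-x^5*X*u)*u^2)"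
definition Dn :: "complex \<Rightarrow> complex \<Rightarrow> complex \<Rightarrow> complex" where
 "Dn x X u = (u-x^2*X)*(1-x^2*X*u)*(u-x*X)*(1-x^3*X*u) / u^2"
definition Cc :: "complex \<Rightarrow> complex \<Rightarrow> complex" where
 "Cc x X = Dd x X / ((1-x*X^2)*(1-x^3*X^2))"

lemma frac_cross: fixes a b c d :: complex shows "b \<noteq> 0 \<Longrightarrow> d \<noteq> 0 \<Longrightarrow> a*d = c*b \<Longrightarrow> a/b = c/d"
  by (simp add: frac_eq_eq)

lemma wz_rat:
  fixes x X u :: complex
  assumes "u \<noteq> 0" "x \<noteq> 0" "1-x*u^2 \<noteq> 0" "1 - x^5*u^2 \<noteq> 0" "1+x^4*u^2 \<noteq> 0" "1-x^4*X*u \<noteq> 0" "1-x^5*X*u \<noteq> 0"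
     "Dd x X \<noteq> 0" "1-x*X^2 \<noteq> 0" "1 - x^3*X^2 \<noteq> 0"
  shows "Rr x X u * hh x X (x^2*u) - hh x X u = 1 - Dn x X u / Cc x X"
proof -
  define K2 where "K2 = x^4*X^2*(1-x^3*X^2)*u^2 - x*(1+x)*X*(1-x^5*X^4)*u + x*X^2*(1-x^3*X^2)"
  have e1: "hh x X (x^2*u) = (1+x^4*u^2)*(1-x^5*X*u)*(1-x^4*X*u)*(x^2*K2) / ((1-x^5*u^2)*(x^4*u^2)*Dd x X)"
  proof -
    have "Kn x X (x^2*u) = x^2*K2" unfolding Kn_def K2_def by algebra
    thus ?thesis unfolding hh_def
      by (intro arg_cong2[where f="(/)"]) (simp only: \<open>Kn x X (x^2*u) = x^2*K2\<close>, algebra)+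
  qed
  have e2: "Rr x X u * hh x X (x^2*u) = (1 + x^2*u^2)*(u - x^2*X)*(u - x*X)*K2 / ((1-x*u^2)*u^2*Dd x X)"
    unfolding e1 Rr_def times_divide_times_eq
    apply (rule frac_cross)
    using assms apply simp
    using assms apply simp
    by algebra
  define N2 where "N2 = (1 + x^2*u^2)*(u - x^2*X)*(u - x*X)*K2"
  define N3 where "N3 = (1+u^2)*(1-x^3*X*u)*(1-x^2*X*u)*Kn x X u"
  define W where "W = (u^2 * Dd x X - (u-x^2*X)*(1-x^2*X*u)*(u-x*X)*(1-x^3*X*u)*((1-x*X^2)*(1-x^3*X^2)))"
  have e3: "Rr x X u * hh x X (x^2*u) - hh x X u = (N2 - N3) / ((1-x*u^2)*u^2*Dd x X)"
    unfolding e2 by (simp add: hh_def N2_def N3_def diff_divide_distrib)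
  have e4: "1 - Dn x X u / Cc x X = W / (u^2 * Dd x X)"
    unfolding Dn_def Cc_def W_def using assms by (simp add: field_simps)
  have P: "W * (1-x*u^2) = N2 - N3"
    unfolding W_def N2_def N3_def K2_def Kn_def Dd_def
    using wz_poly[of x X u] by (simp add: mult.commute)
  show ?thesis unfolding e3 e4
    apply (rule frac_cross)
    using assms apply simp
    using assms apply simp
    by (simp add: P[symmetric] mult.assoc)
qed
lemma hh_top:
  fixes x X :: complex
  assumes "x \<noteq> 0" "X \<noteq> 0" "Dd x X \<noteq> 0" "1 - x*(x^2*X)^2 \<noteq> 0"
  shows "hh x X (x^2*X) = -1"
proof -
  have b: "(1 - x*(x^2*X)^2) * (x^2*X)^2 * Dd x X \<noteq> 0" using assms by simp
  have a: "(1+(x^2*X)^2)*(1-x^3*X*(x^2*X))*(1-x^2*X*(x^2*X))*Kn x X (x^2*X)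
     = - ((1 - x*(x^2*X)^2) * (x^2*X)^2 * Dd x X)"
    unfolding Kn_def Dd_def by algebra
  show ?thesis unfolding hh_def using a b by simp
qed

lemma hh_bot:
  fixes x X u :: complex
  assumes "1 - x^2*X*u = 0" shows "hh x X u = 0"
  unfolding hh_def using assms by simp


definition AA :: "complex \<Rightarrow> int \<Rightarrow> complex" where
 "AA Q n = (if 0 \<le> n then qpoch (-Q) (Q^2) (nat n) / qpoch (-(Q^2)) (Q^2) (nat n)
            else Q^(nat(-n)) * qpoch (-1) (Q^2) (nat(-n)) / qpoch (-Q) (Q^2) (nat(-n)))"

lemma AA_pos: "AA Q (int k) = qpoch (-Q) (Q^2) k / qpoch (-(Q^2)) (Q^2) k"
  by (simp add: AA_def)

lemma AA_neg: "AA Q (- int k) = Q^k * qpoch (-1) (Q^2) k / qpoch (-Q) (Q^2) k"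
  by (cases "k = 0") (auto simp: AA_def)

lemma qpoch_nat_step:
  assumes "0 \<le> m" "Q \<noteq> 0"
  shows "qpoch a Q (nat (m+1)) = qpoch a Q (nat m) * (1 - a * Q powi m)"
proof -
  have "nat (m+1) = Suc (nat m)" using assms by simp
  thus ?thesis using assms by (simp add: qpoch_Suc power_int_def)
qed

lemma cancel1: fixes x b c :: complex shows "c \<noteq> 0 \<Longrightarrow> x / (b*c) * c = x / b"
  by (cases "b=0") (simp_all add: field_simps)

lemma AA_aux: fixes c d t Q :: complex
  assumes "t \<noteq> 0" "Q \<noteq> 0" "d \<noteq> 0" "1 + Q*t^2 \<noteq> 0"
  shows "t*c/d*(1 + Q^2*(inverse(Q*t))^2) = Q*t*(c*(1+t^2))/(d*(1+Q*t^2)) * (1 + Q*(inverse(Q*t))^2)"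
proof -
  have 1: "1 + Q^2*(inverse(Q*t))^2 = (t^2+1)/t^2" using assms by (simp add: field_simps power2_eq_square)
  have 2: "1 + Q*(inverse(Q*t))^2 = (Q*t^2+1)/(Q*t^2)" using assms by (simp add: field_simps power2_eq_square)
  show ?thesis unfolding 1 2 times_divide_eq_right times_divide_eq_left divide_divide_eq_left
    apply (rule frac_cross)
    using assms apply simp
    using assms apply simp
    by algebra
qed

context
  fixes Q :: complex
  assumes Q0: "Q \<noteq> 0" and Q1: "norm Q < 1"
begin

lemma nz_plus: "norm (a::complex) < 1 \<Longrightarrow> qpoch a (Q^2) k \<noteq> 0"
  by (rule qpoch_nz, rule fac_nz) (use Q1 in \<open>auto simp: norm_power power_le_one\<close>)

lemma normQ2: "norm (Q^2) < 1" using Q1 by (simp add: norm_power power_less_one_iff)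
  
lemma AA_step: "AA Q (n+1) * (1 + Q^2 * (Q powi n)^2) = AA Q n * (1 + Q * (Q powi n)^2)"
proof (cases "0 \<le> n")
  case True
  then obtain k where k: "n = int k" by (metis nonneg_eq_int)
  have "n + 1 = int (Suc k)" using k by simp
  hence e: "AA Q (n+1) = qpoch (-Q) (Q^2) k * (1 + Q*(Q^2)^k) / (qpoch (-(Q^2)) (Q^2) k * (1 + Q^2*(Q^2)^k))"
    by (simp only: AA_pos qpoch_Suc) simp
  have n1: "qpoch (-(Q^2)) (Q^2) k \<noteq> 0" by (rule nz_plus) (simp add: normQ2)
  have n2: "1 + Q^2*(Q^2)^k \<noteq> 0"
    using fac_nz[of "-(Q^2)" "Q^2" k] normQ2 by simp
  have p: "(Q powi n)^2 = (Q^2)^k" using k by (simp add: power_mult[symmetric] mult.commute)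
  have "AA Q (n+1) * (1 + Q^2 * (Q powi n)^2) = qpoch (-Q) (Q^2) k * (1 + Q*(Q^2)^k) / qpoch (-(Q^2)) (Q^2) k"
    unfolding e p using n2 by (simp add: cancel1)
  thus ?thesis using k p by (simp add: AA_pos)
next
  case False
  define k where "k = nat (-n - 1)"
  have k: "n = - int (Suc k)" using False by (simp add: k_def)
  have e1: "n + 1 = - int k" using k by simp
  have a1: "AA Q n = Q^(Suc k) * (qpoch (-1) (Q^2) k * (1 + (Q^2)^k)) / (qpoch (-Q) (Q^2) k * (1 + Q*(Q^2)^k))"
    unfolding k AA_neg qpoch_Suc by simp
  have n1: "qpoch (-Q) (Q^2) k \<noteq> 0" by (rule nz_plus) (simp add: Q1)
  have n2: "1 + Q*(Q^2)^k \<noteq> 0"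
    using fac_nz[of "-Q" "Q^2" k] normQ2 Q1 by simp
  have p: "(Q powi n) = inverse (Q^Suc k)" by (simp add: k power_int_def power_inverse nat_add_distrib)
  have qk: "Q^k \<noteq> 0" using Q0 by simp
  have pp: "(Q^2)^k = (Q^k)^2" by (simp add: power_mult[symmetric] mult.commute)
  show ?thesis unfolding e1 AA_neg a1 p pp power_Suc
    by (rule AA_aux) (use n1 n2 qk Q0 pp in auto)
qed

end


definition tm :: "complex \<Rightarrow> int \<Rightarrow> complex" where
 "tm x n = (1 - x * ((x^2) powi n)^2) * (x^2) powi (n*n) * AA (x^2) n"
definition Wt :: "complex \<Rightarrow> nat \<Rightarrow> int \<Rightarrow> complex" where
 "Wt x N n = qpoch (x^2) (x^2) (nat (int N - n)) * qpoch (x^2) (x^2) (nat (int N + n))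
    * qpoch x (x^2) (nat (int N - n)) * qpoch x (x^2) (nat (int N + n + 1))"
definition fN :: "complex \<Rightarrow> nat \<Rightarrow> int \<Rightarrow> complex" where
 "fN x N n = tm x n / Wt x N n"
definition rN :: "complex \<Rightarrow> nat \<Rightarrow> complex" where
 "rN x N = qpoch x (x^2) (2*N) / qpoch ((x^2)^2) ((x^2)^2) (2*N)"

lemma tele_int:
  fixes f :: "int \<Rightarrow> complex"
  shows "(\<Sum>n\<in>{lo..<lo + int k}. f (n+1) - f n) = f (lo + int k) - f lo"
proof (induction k)
  case (Suc k)
  have "{lo..<lo + int (Suc k)} = insert (lo + int k) {lo..<lo + int k}" by auto
  thus ?case using Suc by (simp add: algebra_simps)
qed simp

context
  fixes x :: complex
  assumes x0: "x \<noteq> 0" and x1: "norm x < 1"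
begin

lemma xpow_norm_ne1: "k \<noteq> 0 \<Longrightarrow> norm (x powi k) \<noteq> 1"
proof -
  assume k: "k \<noteq> 0"
  have n0: "0 < norm x" using x0 by simp
  show ?thesis
  proof (cases "k > 0")
    case True
    have "norm x powi k < norm x powi 0" using True n0 x1 by (intro power_int_strict_decreasing) auto
    thus ?thesis by (simp add: norm_power_int)
  next
    case False
    hence "k < 0" using k by simp
    have "norm x powi 0 < norm x powi k" using \<open>k<0\<close> n0 x1 by (intro power_int_strict_decreasing) auto
    thus ?thesis by (simp add: norm_power_int)
  qed
qed

lemma om_nz: "k \<noteq> 0 \<Longrightarrow> 1 - x powi k \<noteq> 0"
proof
  assume "k \<noteq> 0" "1 - x powi k = 0"
  hence "x powi k = 1" by simp
  hence "norm (x powi k) = 1" by simp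
  thus False using xpow_norm_ne1 \<open>k \<noteq> 0\<close> by simp
qed
lemma op_nz: "k \<noteq> 0 \<Longrightarrow> 1 + x powi k \<noteq> 0"
proof
  assume "k \<noteq> 0" "1 + x powi k = 0"
  hence "x powi k = -1" by (simp add: add_eq_0_iff)
  hence "norm (x powi k) = 1" by simp
  thus False using xpow_norm_ne1 \<open>k \<noteq> 0\<close> by simp
qed

lemma m1: "x^k * x powi m = x powi (int k + m)" using x0 by (simp add: power_int_add)
lemma m2: "x powi m * x powi k = x powi (m + k)" using x0 by (simp add: power_int_add)
lemma m3: "x powi m / x powi k = x powi (m - k)" using x0 by (simp add: power_int_diff)
lemma m4: "x * x powi m = x powi (1 + m)" using x0 by (simp add: power_int_add)
lemma m5: "(x powi m)^k = x powi (m * int k)" by (simp add: power_int_mult power_int_power)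
lemma m6: "x powi m * x^k = x powi (m + int k)" using x0 by (simp add: power_int_add)
lemma m7: "x^k / x powi m = x powi (int k - m)" using x0 by (simp add: power_int_diff)
lemma Qpow: "(x^2) powi n = x powi (2*n)" by (simp add: power_int_mult)
lemma Qpow': "(x^2)^N = x powi (2*int N)" by (simp add: power_int_mult flip: power_mult)

lemmas mono = m1 m2 m3 m4 m5 m6 m7 Qpow Qpow'

lemma Q0: "x^2 \<noteq> 0" using x0 by simp
lemma Q1: "norm (x^2) < 1" using x1 by (simp add: norm_power power_less_one_iff)

lemma qpoch_Q_nz: "qpoch (x^2) (x^2) k \<noteq> 0"
  by (rule qpoch_nz, rule fac_nz) (use Q1 in auto)
lemma qpoch_x_nz: "qpoch x (x^2) k \<noteq> 0"
  by (rule qpoch_nz, rule fac_nz) (use x1 Q1 in auto)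

lemma Wt_nz: "Wt x N n \<noteq> 0"
  unfolding Wt_def using qpoch_Q_nz qpoch_x_nz by simp

lemma tm_step:
  fixes n :: int
  defines "u \<equiv> (x^2) powi n"
  shows "tm x (n+1) * ((1 - x*u^2) * (1 + (x^2)^2*u^2)) = tm x n * ((1 - x*(x^2)^2*u^2) * (x^2*u^2) * (1 + x^2*u^2))"
proof -
  have A: "AA (x^2) (n+1) * (1 + (x^2)^2 * u^2) = AA (x^2) n * (1 + x^2 * u^2)"
    unfolding u_def by (rule AA_step[OF Q0 Q1])
  have p1: "(x^2) powi (n+1) = x^2 * u" unfolding u_def using Q0 by (simp add: power_int_add)
  have e: "(n+1)*(n+1) = n*n + (2*n + 1)" by algebra
  have p2: "(x^2) powi ((n+1)*(n+1)) = (x^2) powi (n*n) * (x^2 * u^2)"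
    unfolding e u_def using Q0 by (simp add: power_int_add power_int_mult power2_eq_square mult_ac)
  show ?thesis unfolding tm_def p1 p2 u_def[symmetric] using A by algebra
qed


lemma pw_eq: "a = b \<Longrightarrow> x powi a = x powi b" by simp

lemma Wt_down:
  fixes n :: int and N :: nat
  defines "u \<equiv> (x^2) powi n" and "X \<equiv> (x^2)^N"
  assumes "- int N \<le> n" "n \<le> int N"
  shows "Wt x (Suc N) n = Wt x N n * ((1 - x^2*X/u)*(1-x^2*X*u)*(1-x*X/u)*(1-x^3*X*u))"
proof -
  have a1: "nat (int (Suc N) - n) = nat ((int N - n) + 1)" by simp
  have a2: "nat (int (Suc N) + n) = nat ((int N + n) + 1)" by simp
  have a3: "nat (int (Suc N) + n + 1) = nat ((int N + n + 1) + 1)" by simp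
  have e1: "x^2 * (x^2) powi (int N - n) = x^2*X/u" unfolding X_def u_def by (simp add: mono) (rule pw_eq, simp)
  have e2: "x^2 * (x^2) powi (int N + n) = x^2*X*u" unfolding X_def u_def by (simp add: mono) (rule pw_eq, simp)
  have e3: "x * (x^2) powi (int N - n) = x*X/u" unfolding X_def u_def by (simp add: mono) (rule pw_eq, simp)
  have e4: "x * (x^2) powi (int N + n + 1) = x^3*X*u" unfolding X_def u_def by (simp add: mono) (rule pw_eq, simp)
  have q1: "qpoch (x^2) (x^2) (nat (int (Suc N) - n)) = qpoch (x^2) (x^2) (nat (int N - n)) * (1 - x^2*X/u)"
    unfolding a1 e1[symmetric] by (rule qpoch_nat_step) (use assms Q0 in auto)
  have q2: "qpoch (x^2) (x^2) (nat (int (Suc N) + n)) = qpoch (x^2) (x^2) (nat (int N + n)) * (1 - x^2*X*u)"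
    unfolding a2 e2[symmetric] by (rule qpoch_nat_step) (use assms Q0 in auto)
  have q3: "qpoch x (x^2) (nat (int (Suc N) - n)) = qpoch x (x^2) (nat (int N - n)) * (1 - x*X/u)"
    unfolding a1 e3[symmetric] by (rule qpoch_nat_step) (use assms Q0 in auto)
  have q4: "qpoch x (x^2) (nat (int (Suc N) + n + 1)) = qpoch x (x^2) (nat (int N + n + 1)) * (1 - x^3*X*u)"
    unfolding a3 e4[symmetric] by (rule qpoch_nat_step) (use assms Q0 in auto)
  show ?thesis unfolding Wt_def q1 q2 q3 q4 by algebra
qed


lemma pw1_iff: "x powi k = 1 \<longleftrightarrow> k = 0"
  using om_nz[of k] by auto
lemma pwm1: "x powi k \<noteq> -1"
proof (cases "k = 0")
  case False thus ?thesis using op_nz[of k] by (auto simp: add_eq_0_iff)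
qed simp

lemma opnz_all: "1 + x powi k \<noteq> 0"
  using pwm1[of k] by (metis add.inverse_inverse add_eq_0_iff)

lemma Wt_step:
  fixes n :: int and N :: nat
  defines "u \<equiv> (x^2) powi n" and "X \<equiv> (x^2)^N"
  assumes "- int (Suc N) \<le> n" "n \<le> int N"
  shows "Wt x (Suc N) (n+1) * ((1 - x^2*X/u) * (1 - x*X/u)) = Wt x (Suc N) n * ((1 - x^4*X*u) * (1 - x^5*X*u))"
proof -
  have a1: "nat (int (Suc N) - n) = nat ((int (Suc N) - (n+1)) + 1)" by simp
  have a2: "nat (int (Suc N) + (n+1)) = nat ((int (Suc N) + n) + 1)" by simp
  have a3: "nat (int (Suc N) + (n+1) + 1) = nat ((int (Suc N) + n + 1) + 1)" by simp
  have e1: "x^2 * (x^2) powi (int (Suc N) - (n+1)) = x^2*X/u" unfolding X_def u_def by (simp add: mono) (rule pw_eq, simp)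
  have e2: "x^2 * (x^2) powi (int (Suc N) + n) = x^4*X*u" unfolding X_def u_def by (simp add: mono) (rule pw_eq, simp)
  have e3: "x * (x^2) powi (int (Suc N) - (n+1)) = x*X/u" unfolding X_def u_def by (simp add: mono) (rule pw_eq, simp)
  have e4: "x * (x^2) powi (int (Suc N) + n + 1) = x^5*X*u" unfolding X_def u_def by (simp add: mono) (rule pw_eq, simp)
  have q1: "qpoch (x^2) (x^2) (nat (int (Suc N) - n)) = qpoch (x^2) (x^2) (nat (int (Suc N) - (n+1))) * (1 - x^2*X/u)"
    unfolding a1 e1[symmetric] by (rule qpoch_nat_step) (use assms Q0 in auto)
  have q2: "qpoch (x^2) (x^2) (nat (int (Suc N) + (n+1))) = qpoch (x^2) (x^2) (nat (int (Suc N) + n)) * (1 - x^4*X*u)"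
    unfolding a2 e2[symmetric] by (rule qpoch_nat_step) (use assms Q0 in auto)
  have q3: "qpoch x (x^2) (nat (int (Suc N) - n)) = qpoch x (x^2) (nat (int (Suc N) - (n+1))) * (1 - x*X/u)"
    unfolding a1 e3[symmetric] by (rule qpoch_nat_step) (use assms Q0 in auto)
  have q4: "qpoch x (x^2) (nat (int (Suc N) + (n+1) + 1)) = qpoch x (x^2) (nat (int (Suc N) + n + 1)) * (1 - x^5*X*u)"
    unfolding a3 e4[symmetric] by (rule qpoch_nat_step) (use assms Q0 in auto)
  show ?thesis unfolding Wt_def q1 q2 q3 q4 by algebra
qed

lemma ratio_lemma:
  fixes a b c d A1 B1 A2 B2 :: complex
  assumes "c*A1 = a*B1" "d*A2 = b*B2" "A1\<noteq>0" "A2\<noteq>0" "b\<noteq>0" "B2\<noteq>0"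
  shows "c/d = a/b * (B1*A2/(A1*B2))"
proof -
  have c: "c = a*B1/A1" using assms by (simp add: field_simps)
  have d: "d = b*B2/A2" using assms by (simp add: field_simps)
  show ?thesis unfolding c d using assms by (simp add: field_simps)
qed

lemma g_step:
  fixes n :: int and N :: nat
  defines "u \<equiv> (x^2) powi n" and "X \<equiv> (x^2)^N"
  assumes n1: "- int (Suc N) \<le> n" and n2: "n \<le> int N"
  shows "fN x (Suc N) (n+1) = fN x (Suc N) n * Rr x X u"
proof -
  have u0: "u \<noteq> 0" unfolding u_def using x0 by simp
  have A1: "(1 - x*u^2) * (1 + (x^2)^2*u^2) \<noteq> 0" unfolding u_def
    by (simp add: mono pw1_iff opnz_all; presburger)
  have A2: "(1 - x^2*X/u) * (1 - x*X/u) \<noteq> 0" unfolding u_def X_def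
    using n2 by (simp add: mono pw1_iff; presburger)
  have B2: "(1 - x^4*X*u) * (1 - x^5*X*u) \<noteq> 0" unfolding u_def X_def
    using n1 by (simp add: mono pw1_iff; presburger)
  have r: "fN x (Suc N) (n+1) = fN x (Suc N) n * (((1 - x*(x^2)^2*u^2) * (x^2*u^2) * (1 + x^2*u^2)) * ((1 - x^2*X/u) * (1 - x*X/u))
             / (((1 - x*u^2) * (1 + (x^2)^2*u^2)) * ((1 - x^4*X*u) * (1 - x^5*X*u))))"
    unfolding fN_def
    by (rule ratio_lemma[OF tm_step[of n, folded u_def] Wt_step[OF n1 n2, folded u_def X_def] A1 A2 Wt_nz B2])
  have A2': "(1 - x^2*X/u) * (1 - x*X/u) = (u - x^2*X)*(u - x*X)/u^2"
    using u0 by (simp add: field_simps power2_eq_square)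
  have "((1 - x*(x^2)^2*u^2) * (x^2*u^2) * (1 + x^2*u^2)) * ((1 - x^2*X/u) * (1 - x*X/u))
             / (((1 - x*u^2) * (1 + (x^2)^2*u^2)) * ((1 - x^4*X*u) * (1 - x^5*X*u))) = Rr x X u"
    unfolding A2' Rr_def times_divide_eq_right divide_divide_eq_left
    apply (rule frac_cross)
    using A1 B2 u0 apply simp
    using A1 B2 u0 apply (simp add: power_mult_distrib flip: power_mult)
    by algebra
  thus ?thesis using r by simp
qed


lemma wz_step:
  fixes n :: int and N :: nat
  defines "u \<equiv> (x^2) powi n" and "X \<equiv> (x^2)^N"
  assumes n1: "- int (Suc N) \<le> n" and n2: "n \<le> int N"
  shows "fN x (Suc N) (n+1) * hh x X ((x^2) powi (n+1)) - fN x (Suc N) n * hh x X u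
     = fN x (Suc N) n * (1 - Dn x X u / Cc x X)"
proof -
  have p: "(x^2) powi (n+1) = x^2 * u" unfolding u_def using x0 by (simp add: power_int_add)
  have "Rr x X u * hh x X (x^2*u) - hh x X u = 1 - Dn x X u / Cc x X"
  proof (rule wz_rat)
    show "u \<noteq> 0" unfolding u_def using x0 by simp
    show "1 - x*u^2 \<noteq> 0" "1 - x^5*u^2 \<noteq> 0" "1+x^4*u^2 \<noteq> 0" unfolding u_def
      by (simp_all add: mono pw1_iff opnz_all; presburger)+
    show "1 - x^4*X*u \<noteq> 0" "1 - x^5*X*u \<noteq> 0" unfolding u_def X_def
      using n1 by (simp_all add: mono pw1_iff opnz_all; presburger)+
    show "Dd x X \<noteq> 0" unfolding Dd_def X_def by (simp add: mono pw1_iff)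
    show "1-x*X^2 \<noteq> 0" "1 - x^3*X^2 \<noteq> 0" unfolding X_def by (simp_all add: mono pw1_iff)
  qed (use x0 in simp)
  moreover have "fN x (Suc N) n * Rr x X u * hh x X (x^2*u) - fN x (Suc N) n * hh x X u
      = fN x (Suc N) n * (Rr x X u * hh x X (x^2*u) - hh x X u)" by (simp add: algebra_simps)
  ultimately show ?thesis unfolding p g_step[OF n1 n2, folded u_def X_def] by simp
qed

lemma Dn_alt: "u \<noteq> 0 \<Longrightarrow> Dn x X u = (1 - x^2*X/u)*(1-x^2*X*u)*(1-x*X/u)*(1-x^3*X*u)"
  unfolding Dn_def by (simp add: field_simps power2_eq_square)

lemma rN_step: "rN x (Suc N) = rN x N / Cc x ((x^2)^N)"
proof -
  define X where "X = (x^2)^N"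
  have e: "2 * Suc N = Suc (Suc (2*N))" by simp
  have f1: "x * (x^2)^(2*N) = x*X^2" unfolding X_def by (simp add: mono; (rule pw_eq, simp)?)
  have f2: "x * (x^2)^(Suc (2*N)) = x^3*X^2" unfolding X_def by (simp add: mono; (rule pw_eq, simp)?)
  have f3: "(x^2)^2 * ((x^2)^2)^(2*N) = x^4*X^4" unfolding X_def by (simp add: mono flip: power_mult; (rule pw_eq, simp)?)
  have f4: "(x^2)^2 * ((x^2)^2)^(Suc (2*N)) = x^8*X^4" unfolding X_def by (simp add: mono flip: power_mult; (rule pw_eq, simp)?)
  have r: "rN x (Suc N) = qpoch x (x^2) (2*N) * (1 - x*X^2) * (1 - x^3*X^2) /
       (qpoch ((x^2)^2) ((x^2)^2) (2*N) * (1 - x^4*X^4) * (1 - x^8*X^4))"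
    unfolding rN_def e qpoch_Suc f1 f2 f3 f4 by simp
  have d1: "qpoch ((x^2)^2) ((x^2)^2) (2*N) \<noteq> 0"
  proof -
    have "norm ((x^2)^2) < 1" using x1 by (simp add: norm_power power_less_one_iff)
    thus ?thesis by (intro qpoch_nz fac_nz) auto
  qed
  have d2: "(1 - x*X^2)*(1 - x^3*X^2) \<noteq> 0" unfolding X_def by (simp add: mono pw1_iff)
  have d3: "Dd x X \<noteq> 0" unfolding Dd_def X_def by (simp add: mono pw1_iff)
  show ?thesis unfolding r X_def[symmetric] unfolding rN_def Cc_def Dd_def divide_divide_times_eq
    by (simp add: mult.assoc)
qed

end


context
  fixes x :: complex
  assumes x0: "x \<noteq> 0" and x1: "norm x < 1"
begin

lemma fin_id: "(\<Sum>n\<in>{-int N..int N}. fN x N n) = rN x N"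
proof (induction N)
  case 0
  have "x \<noteq> 1" using x1 by auto
  hence "fN x 0 0 = 1" unfolding fN_def tm_def Wt_def by (simp add: AA_def qpoch_def)
  thus ?case by (simp add: rN_def)
next
  case (Suc N)
  define X where "X = (x^2)^N"
  define g where "g = fN x (Suc N)"
  define u where "u = (\<lambda>n::int. (x^2) powi n)"
  define a where "a = (\<lambda>n. g n * hh x X (u n))"
  define M where "M = int (Suc N)"
  have S1: "\<And>n. n \<in> {-M..<M} \<Longrightarrow> a (n+1) - a n = g n * (1 - Dn x X (u n) / Cc x X)"
  proof -
    fix n assume "n \<in> {-M..<M}"
    hence n1: "- int (Suc N) \<le> n" and n2: "n \<le> int N" unfolding M_def by auto
    show "a (n+1) - a n = g n * (1 - Dn x X (u n) / Cc x X)"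
      unfolding a_def g_def u_def X_def using wz_step[OF x0 x1 n1 n2] by simp
  qed
  have T: "(\<Sum>n\<in>{-M..<M}. a (n+1) - a n) = a M - a (-M)"
    using tele_int[of a "-M" "2 * Suc N"] unfolding M_def by simp
  have uM: "u M = x^2 * X" unfolding u_def M_def X_def by (simp add: power_int_add)
  have X0: "X \<noteq> 0" unfolding X_def using x0 by simp
  have Dd0: "Dd x X \<noteq> 0" unfolding Dd_def X_def by (simp add: mono[OF x0 x1] pw1_iff[OF x0 x1])
  have c1: "1 - x*(x^2*X)^2 \<noteq> 0" unfolding X_def by (simp add: mono[OF x0 x1] pw1_iff[OF x0 x1])
  have aM: "a M = - g M" unfolding a_def uM using hh_top[OF x0 X0 Dd0 c1] by simp
  have pmM: "u (-M) = inverse ((x^2)^Suc N)" unfolding u_def M_def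
    by (simp add: power_int_def power_inverse nat_add_distrib)
  have umM: "1 - x^2*X*u (-M) = 0" unfolding pmM X_def using x0 by (simp add: field_simps)
  have amM: "a (-M) = 0" unfolding a_def using hh_bot[OF umM] by simp
  have DnM: "Dn x X (u M) = 0" unfolding Dn_def uM by simp
  have DnmM: "Dn x X (u (-M)) = 0" unfolding Dn_def using umM by simp
  have Sdn: "(\<Sum>n\<in>{-M..M}. g n * Dn x X (u n)) = (\<Sum>n\<in>{-int N..int N}. fN x N n)"
  proof -
    have eq: "{-M..M} = insert (-M) (insert M {-int N..int N})" unfolding M_def by auto
    have "(\<Sum>n\<in>{-M..M}. g n * Dn x X (u n)) = (\<Sum>n\<in>{-int N..int N}. g n * Dn x X (u n))"
      unfolding eq using DnM DnmM unfolding M_def by (simp add: sum.insert_if)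
    also have "\<dots> = (\<Sum>n\<in>{-int N..int N}. fN x N n)"
    proof (rule sum.cong[OF refl])
      fix n assume "n \<in> {-int N..int N}"
      hence n1: "- int N \<le> n" and n2: "n \<le> int N" by auto
      have u0: "u n \<noteq> 0" unfolding u_def using x0 by simp
      have W: "Wt x (Suc N) n = Wt x N n * Dn x X (u n)"
        unfolding Dn_alt[OF x0 x1 u0] unfolding u_def X_def by (rule Wt_down[OF x0 x1 n1 n2])
      have "Dn x X (u n) \<noteq> 0" using Wt_nz[OF x0 x1, of "Suc N" n] W by auto
      thus "g n * Dn x X (u n) = fN x N n" unfolding g_def fN_def W by simp
    qed
    finally show ?thesis .
  qed
  have sum_split: "(\<Sum>n\<in>{-M..M}. g n) = (\<Sum>n\<in>{-M..<M}. g n) + g M"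
  proof -
    have "{-M..M} = insert M {-M..<M}" unfolding M_def by auto
    thus ?thesis by (simp add: add.commute)
  qed
  have sum_split2: "(\<Sum>n\<in>{-M..M}. g n * Dn x X (u n)) = (\<Sum>n\<in>{-M..<M}. g n * Dn x X (u n))"
  proof -
    have "{-M..M} = insert M {-M..<M}" unfolding M_def by auto
    thus ?thesis using DnM by simp
  qed
  have E1: "(\<Sum>n\<in>{-M..<M}. g n * (1 - Dn x X (u n) / Cc x X)) = (\<Sum>n\<in>{-M..<M}. a (n+1) - a n)"
    by (rule sum.cong[OF refl]) (rule S1[symmetric], assumption)
  have E2: "(\<Sum>n\<in>{-M..<M}. g n * (1 - Dn x X (u n) / Cc x X)) = - g M"
    unfolding E1 T aM amM by simp
  have E3: "(\<Sum>n\<in>{-M..<M}. g n * (1 - Dn x X (u n) / Cc x X)) + (\<Sum>n\<in>{-M..<M}. g n * Dn x X (u n)) / Cc x X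
     = (\<Sum>n\<in>{-M..<M}. g n * (1 - Dn x X (u n) / Cc x X) + g n * Dn x X (u n) / Cc x X)"
    by (simp only: sum_divide_distrib sum.distrib)
  have E4: "(\<Sum>n\<in>{-M..<M}. g n * (1 - Dn x X (u n) / Cc x X) + g n * Dn x X (u n) / Cc x X) = (\<Sum>n\<in>{-M..<M}. g n)"
    by (rule sum.cong[OF refl]) (simp add: right_diff_distrib)
  have E5: "(\<Sum>n\<in>{-M..<M}. g n) = - g M + rN x N / Cc x X"
    using E3 E4 E2 sum_split2 Sdn Suc.IH by simp
  have "(\<Sum>n\<in>{-M..M}. g n) = rN x N / Cc x X"
    unfolding sum_split E5 by simp
  thus ?case unfolding rN_step[OF x0 x1] X_def[symmetric] g_def M_def by simp
qed

end


lemma qpoch_m1: "qpoch (-1) (Q^2) (Suc k) = 2 * qpoch (-(Q^2)) (Q^2) k"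
  unfolding qpoch_def by (subst prod.lessThan_Suc_shift) (simp add: power_Suc)

lemma summ_bound:
  fixes Q :: complex and A B :: "nat \<Rightarrow> complex" and e :: "nat \<Rightarrow> nat"
  assumes Q: "norm Q < 1" and e: "\<And>k. k \<le> e k" and A: "\<And>k. norm (A k) \<le> CA" and B: "\<And>k. norm (1 / B k) \<le> CB"
  shows "summable (\<lambda>k. norm (Q^(e k) * A k / B k))"
proof (rule summable_comparison_test)
  show "summable (\<lambda>k. CA * CB * norm Q ^ k)"
    using Q by (intro summable_mult summable_geometric) auto
  show "\<exists>N. \<forall>k\<ge>N. norm (norm (Q^(e k) * A k / B k)) \<le> CA * CB * norm Q ^ k"
  proof (intro exI allI impI)
    fix k :: nat
    have CA: "0 \<le> CA" using A[of 0] norm_ge_zero order_trans by blast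
    have "norm (Q^(e k) * A k / B k) = norm Q ^ e k * (norm (A k) * norm (1 / B k))"
      by (simp add: norm_mult norm_divide norm_power)
    also have "\<dots> \<le> norm Q ^ k * (CA * CB)"
      using Q e A B CA by (intro mult_mono power_decreasing) auto
    finally show "norm (norm (Q^(e k) * A k / B k)) \<le> CA * CB * norm Q ^ k" by (simp add: mult_ac)
  qed
qed

context
  fixes x :: complex
  assumes x0: "x \<noteq> 0" and x1: "norm x < 1"
begin

lemma nQ: "norm (x^2) < 1" using x1 by (simp add: norm_power power_less_one_iff)
lemma nQ2: "norm ((x^2)^2) < 1" using x1 by (simp add: norm_power power_less_one_iff)

lemma summ_S0: "summable (\<lambda>n. norm ((x^2) ^ (n^2) * qpoch (-(x^2)) ((x^2)^2) n / qpoch (-((x^2)^2)) ((x^2)^2) n))"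
  by (rule summ_bound[OF nQ _ qpoch_norm_le[OF nQ2] qpoch_inv_norm_le[OF nQ2]])
     (use nQ2 in \<open>auto simp: power2_eq_square\<close>)
lemma summ_S1: "summable (\<lambda>n. norm ((x^2) ^ (n*(n+2)) * qpoch (-(x^2)) ((x^2)^2) n / qpoch (-((x^2)^2)) ((x^2)^2) n))"
  by (rule summ_bound[OF nQ _ qpoch_norm_le[OF nQ2] qpoch_inv_norm_le[OF nQ2]])
     (use nQ2 in \<open>auto simp: power2_eq_square\<close>)
lemma summ_T0: "summable (\<lambda>n. norm ((x^2) ^ ((n+1)*(n+2)) * qpoch (-((x^2)^2)) ((x^2)^2) n / qpoch (-(x^2)) ((x^2)^2) (n+1)))"
  by (rule summ_bound[OF nQ _ qpoch_norm_le[OF nQ2] qpoch_inv_norm_le[OF nQ2]])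
     (use nQ in \<open>auto simp: power2_eq_square\<close>)
lemma summ_T1: "summable (\<lambda>n. norm ((x^2) ^ (n*(n+1)) * qpoch (-((x^2)^2)) ((x^2)^2) n / qpoch (-(x^2)) ((x^2)^2) (n+1)))"
  by (rule summ_bound[OF nQ _ qpoch_norm_le[OF nQ2] qpoch_inv_norm_le[OF nQ2]])
     (use nQ in \<open>auto simp: power2_eq_square\<close>)


lemma tm_pos: "tm x (int k) = (x^2) ^ (k^2) * qpoch (-(x^2)) ((x^2)^2) k / qpoch (-((x^2)^2)) ((x^2)^2) k
    - x * ((x^2) ^ (k*(k+2)) * qpoch (-(x^2)) ((x^2)^2) k / qpoch (-((x^2)^2)) ((x^2)^2) k)"
proof -
  have p1: "(x^2) powi (int k * int k) = (x^2)^(k^2)" by (simp add: power2_eq_square flip: of_nat_mult)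
  have p2: "(x^2)^(k*(k+2)) = (x^2)^(k^2) * ((x^2)^k)^2"
    by (simp add: power_add[symmetric] power_mult[symmetric] algebra_simps power2_eq_square)
  show ?thesis unfolding tm_def AA_pos p1 p2 by (simp add: algebra_simps)
qed

lemma tm_neg: "tm x (- int (Suc k)) = 2 * ((x^2) ^ ((k+1)*(k+2)) * qpoch (-((x^2)^2)) ((x^2)^2) k / qpoch (-(x^2)) ((x^2)^2) (k+1))
    - 2 * x * ((x^2) ^ (k*(k+1)) * qpoch (-((x^2)^2)) ((x^2)^2) k / qpoch (-(x^2)) ((x^2)^2) (k+1))"
proof -
  define P where "P = (x^2)^(Suc k)"
  have P0: "P \<noteq> 0" unfolding P_def using x0 by simp
  have p0: "(x^2) powi (- int (Suc k)) = inverse P" unfolding P_def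
    by (simp add: power_int_def power_inverse nat_add_distrib)
  have "- int (Suc k) * - int (Suc k) = int ((k+1)*(k+1))" by (simp add: algebra_simps)
  hence p1: "(x^2) powi (- int (Suc k) * - int (Suc k)) = (x^2)^((k+1)*(k+1))"
    by (simp only: power_int_of_nat)
  have e1: "(x^2)^((k+1)*(k+1)) * P = (x^2)^((k+1)*(k+2))"
    unfolding P_def by (simp add: power_add[symmetric] algebra_simps)
  have e2: "(x^2)^((k+1)*(k+2)) = (x^2)^(k*(k+1)) * P^2"
    unfolding P_def by (simp add: power_add[symmetric] power_mult[symmetric] algebra_simps power2_eq_square)
  have a: "AA (x^2) (- int (Suc k)) = P * (2 * qpoch (-((x^2)^2)) ((x^2)^2) k) / qpoch (-(x^2)) ((x^2)^2) (k+1)"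
    unfolding AA_neg qpoch_m1 P_def by simp
  define c where "c = qpoch (-((x^2)^2)) ((x^2)^2) k / qpoch (-(x^2)) ((x^2)^2) (k+1)"
  have "tm x (- int (Suc k)) = 2 * c * ((x^2)^((k+1)*(k+1)) * P) - 2 * c * x * ((x^2)^((k+1)*(k+1)) * P) * (inverse P)^2"
    unfolding tm_def p0 p1 a c_def by (simp add: algebra_simps)
  also have "\<dots> = 2 * c * (x^2)^((k+1)*(k+2)) - 2 * c * x * (x^2)^(k*(k+1))"
    unfolding e1 unfolding e2 using P0 by (simp add: power2_eq_square field_simps)
  finally show ?thesis unfolding c_def by (simp add: algebra_simps)
qed

end


lemma sum_split_int:
  fixes f :: "int \<Rightarrow> complex"
  shows "(\<Sum>n\<in>{-int N..int N}. f n) = (\<Sum>k\<in>{..N}. f (int k)) + (\<Sum>k<N. f (- int (Suc k)))"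
proof -
  have eq: "{-int N..int N} = int ` {..N} \<union> (\<lambda>k. - int (Suc k)) ` {..<N}"
  proof (rule set_eqI, rule iffI)
    fix n assume n: "n \<in> {-int N..int N}"
    show "n \<in> int ` {..N} \<union> (\<lambda>k. - int (Suc k)) ` {..<N}"
    proof (cases "0 \<le> n")
      case True
      hence "n = int (nat n)" "nat n \<in> {..N}" using n by auto
      thus ?thesis by blast
    next
      case False
      hence "n = - int (Suc (nat (-n-1)))" "nat (-n-1) \<in> {..<N}" using n by auto
      thus ?thesis by blast
    qed
  qed auto
  have disj: "int ` {..N} \<inter> (\<lambda>k. - int (Suc k)) ` {..<N} = {}" by auto
  have "(\<Sum>n\<in>{-int N..int N}. f n) = (\<Sum>n\<in>int ` {..N}. f n) + (\<Sum>n\<in>(\<lambda>k. - int (Suc k)) ` {..<N}. f n)"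
    unfolding eq by (rule sum.union_disjoint) (use disj in auto)
  also have "\<dots> = (\<Sum>k\<in>{..N}. f (int k)) + (\<Sum>k<N. f (- int (Suc k)))"
    by (subst sum.reindex, simp add: inj_on_def, subst sum.reindex, simp add: inj_on_def, simp)
  finally show ?thesis .
qed

lemma lim_shift_minus: "(f \<longlongrightarrow> l) sequentially \<Longrightarrow> ((\<lambda>N. f (N - k)) \<longlongrightarrow> l) sequentially"
  by (rule filterlim_compose[OF _ filterlim_minus_const_nat_at_top])
lemma lim_shift_plus: "(f \<longlongrightarrow> l) sequentially \<Longrightarrow> ((\<lambda>N. f (N + k)) \<longlongrightarrow> l) sequentially"
  by (rule LIMSEQ_ignore_initial_segment)

context
  fixes x :: complex
  assumes x0: "x \<noteq> 0" and x1: "norm x < 1"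
begin

definition "LL = qpoch_inf (x^2) (x^2) * qpoch_inf (x^2) (x^2) * qpoch_inf x (x^2) * qpoch_inf x (x^2)"

lemma facQ: "1 - x^2*(x^2)^j \<noteq> 0" by (rule fac_nz) (use nQ[OF x0 x1] in auto)
lemma facx: "1 - x*(x^2)^j \<noteq> 0" by (rule fac_nz) (use nQ[OF x0 x1] x1 in auto)

lemma limQ: "(\<lambda>n. qpoch (x^2) (x^2) n) \<longlonglongrightarrow> qpoch_inf (x^2) (x^2)"
  by (rule qpoch_LIMSEQ[OF nQ[OF x0 x1] facQ])
lemma limx: "(\<lambda>n. qpoch x (x^2) n) \<longlonglongrightarrow> qpoch_inf x (x^2)"
  by (rule qpoch_LIMSEQ[OF nQ[OF x0 x1] facx])

lemma LL_nz: "LL \<noteq> 0"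
  unfolding LL_def using qpoch_inf_nz[OF nQ[OF x0 x1] facQ] qpoch_inf_nz[OF nQ[OF x0 x1] facx] by simp

lemma Wt_pos_lim: "(\<lambda>N. Wt x N (int k)) \<longlonglongrightarrow> LL"
proof -
  have e: "\<And>N. Wt x N (int k) = qpoch (x^2) (x^2) (N - k) * qpoch (x^2) (x^2) (N + k) * qpoch x (x^2) (N - k) * qpoch x (x^2) (N + (k+1))"
  proof -
    fix N
    have a: "nat (int N - int k) = N - k" by (cases "k \<le> N") auto
    have b: "nat (int N + int k) = N + k" by simp
    have c: "nat (int N + int k + 1) = N + (k+1)" by simp
    show "Wt x N (int k) = qpoch (x^2) (x^2) (N - k) * qpoch (x^2) (x^2) (N + k) * qpoch x (x^2) (N - k) * qpoch x (x^2) (N + (k+1))"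
      unfolding Wt_def by (simp only: a b c)
  qed
  show ?thesis unfolding e LL_def
    by (intro tendsto_mult lim_shift_minus lim_shift_plus limQ limx)
qed

lemma Wt_neg_lim: "(\<lambda>N. Wt x N (- int (Suc k))) \<longlonglongrightarrow> LL"
proof -
  have e: "\<And>N. Wt x N (- int (Suc k)) = qpoch (x^2) (x^2) (N + Suc k) * qpoch (x^2) (x^2) (N - Suc k) * qpoch x (x^2) (N + Suc k) * qpoch x (x^2) (N - k)"
  proof -
    fix N
    have a: "nat (int N - - int (Suc k)) = N + Suc k" by simp
    have b: "nat (int N + - int (Suc k)) = N - Suc k" by (cases "Suc k \<le> N") auto
    have c: "nat (int N + - int (Suc k) + 1) = N - k" by (cases "Suc k \<le> N") auto
    show "Wt x N (- int (Suc k)) = qpoch (x^2) (x^2) (N + Suc k) * qpoch (x^2) (x^2) (N - Suc k) * qpoch x (x^2) (N + Suc k) * qpoch x (x^2) (N - k)"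
      unfolding Wt_def by (simp only: a b c)
  qed
  show ?thesis unfolding e LL_def
    by (intro tendsto_mult lim_shift_minus lim_shift_plus limQ limx)
qed

definition "BB = (exp (norm (x^2) / ((1 - norm (x^2)) * (1 - norm (x^2)))))^2 * (exp (norm x / ((1 - norm x) * (1 - norm (x^2)))))^2"

lemma BB_nn: "0 \<le> BB" unfolding BB_def by (intro mult_nonneg_nonneg zero_le_power2)

lemma Wt_inv_bound: "norm (1 / Wt x N n) \<le> BB"
proof -
  have b1: "\<And>k. norm (1 / qpoch (x^2) (x^2) k) \<le> exp (norm (x^2) / ((1 - norm (x^2)) * (1 - norm (x^2))))"
    by (rule qpoch_inv_norm_le[OF nQ[OF x0 x1] nQ[OF x0 x1]])
  have b2: "\<And>k. norm (1 / qpoch x (x^2) k) \<le> exp (norm x / ((1 - norm x) * (1 - norm (x^2))))"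
    by (rule qpoch_inv_norm_le[OF nQ[OF x0 x1] x1])
  have "norm (1 / Wt x N n) = norm (1 / qpoch (x^2) (x^2) (nat (int N - n))) * norm (1 / qpoch (x^2) (x^2) (nat (int N + n)))
     * (norm (1 / qpoch x (x^2) (nat (int N - n))) * norm (1 / qpoch x (x^2) (nat (int N + n + 1))))"
    unfolding Wt_def by (simp add: norm_mult norm_divide)
  also have "\<dots> \<le> exp (norm (x^2) / ((1 - norm (x^2)) * (1 - norm (x^2)))) * exp (norm (x^2) / ((1 - norm (x^2)) * (1 - norm (x^2))))
     * (exp (norm x / ((1 - norm x) * (1 - norm (x^2)))) * exp (norm x / ((1 - norm x) * (1 - norm (x^2)))))"
    by (intro mult_mono b1 b2 mult_nonneg_nonneg norm_ge_zero) auto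
  finally show ?thesis unfolding BB_def by (simp add: power2_eq_square mult_ac)
qed

end


lemma nd1: fixes a b c :: complex shows "norm (a - c*b) \<le> norm a + norm c * norm b"
  by (metis norm_triangle_ineq4 norm_mult)
lemma nd2: fixes a b c :: complex shows "norm (2*a - 2*c*b) \<le> 2*norm a + 2*norm c * norm b"
proof -
  have "norm (2*a - 2*c*b) \<le> norm (2*a) + norm (2*c*b)" by (rule norm_triangle_ineq4)
  thus ?thesis by (simp add: norm_mult)
qed

context
  fixes x :: complex
  assumes x0: "x \<noteq> 0" and x1: "norm x < 1"
begin

abbreviation "s0 k \<equiv> (x^2) ^ (k^2) * qpoch (-(x^2)) ((x^2)^2) k / qpoch (-((x^2)^2)) ((x^2)^2) k"
abbreviation "s1 k \<equiv> (x^2) ^ (k*(k+2)) * qpoch (-(x^2)) ((x^2)^2) k / qpoch (-((x^2)^2)) ((x^2)^2) k"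
abbreviation "t0 k \<equiv> (x^2) ^ ((k+1)*(k+2)) * qpoch (-((x^2)^2)) ((x^2)^2) k / qpoch (-(x^2)) ((x^2)^2) (k+1)"
abbreviation "t1 k \<equiv> (x^2) ^ (k*(k+1)) * qpoch (-((x^2)^2)) ((x^2)^2) k / qpoch (-(x^2)) ((x^2)^2) (k+1)"

lemma summ_tm_pos: "summable (\<lambda>k. norm (tm x (int k)))"
proof (rule summable_comparison_test)
  show "summable (\<lambda>k. norm (s0 k) + norm x * norm (s1 k))"
    by (intro summable_add summable_mult summ_S0[OF x0 x1] summ_S1[OF x0 x1])
  show "\<exists>N. \<forall>n\<ge>N. norm (norm (tm x (int n))) \<le> norm (s0 n) + norm x * norm (s1 n)"
    unfolding tm_pos[OF x0 x1] by (intro exI allI impI) (simp only: real_norm_def abs_norm_cancel nd1)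
qed

lemma summ_tm_neg: "summable (\<lambda>k. norm (tm x (- int (Suc k))))"
proof (rule summable_comparison_test)
  show "summable (\<lambda>k. 2 * norm (t0 k) + 2 * norm x * norm (t1 k))"
    by (intro summable_add summable_mult summ_T0[OF x0 x1] summ_T1[OF x0 x1])
  show "\<exists>N. \<forall>n\<ge>N. norm (norm (tm x (- int (Suc n)))) \<le> 2 * norm (t0 n) + 2 * norm x * norm (t1 n)"
    unfolding tm_neg[OF x0 x1] by (intro exI allI impI) (simp only: real_norm_def abs_norm_cancel nd2)
qed

lemma BB_nonneg: "0 \<le> BB x" using BB_nn[OF x0 x1] .

lemma fN_bound: "norm (fN x N n) \<le> norm (tm x n) * BB x"
proof -
  have "norm (fN x N n) = norm (tm x n) * norm (1 / Wt x N n)" unfolding fN_def by (simp add: norm_divide)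
  also have "\<dots> \<le> norm (tm x n) * BB x" by (intro mult_left_mono Wt_inv_bound[OF x0 x1]) auto
  finally show ?thesis .
qed

lemma pos_lim: "(\<lambda>N. \<Sum>k\<in>{..N}. fN x N (int k)) \<longlonglongrightarrow> (\<Sum>k. tm x (int k) / LL x)"
proof -
  define a where "a = (\<lambda>k N. if k \<le> N then fN x N (int k) else 0)"
  have lim: "\<And>k. ((\<lambda>N. a k N) \<longlongrightarrow> tm x (int k) / LL x) sequentially"
  proof -
    fix k
    have "((\<lambda>N. tm x (int k) / Wt x N (int k)) \<longlongrightarrow> tm x (int k) / LL x) sequentially"
      by (intro tendsto_divide tendsto_const Wt_pos_lim[OF x0 x1] LL_nz[OF x0 x1])
    moreover have "eventually (\<lambda>N. tm x (int k) / Wt x N (int k) = a k N) sequentially"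
      using eventually_ge_at_top[of k] by eventually_elim (simp add: a_def fN_def)
    ultimately show "((\<lambda>N. a k N) \<longlongrightarrow> tm x (int k) / LL x) sequentially"
      by (rule Lim_transform_eventually)
  qed
  have bound: "eventually (\<lambda>(k,N). norm (a k N) \<le> norm (tm x (int k)) * BB x) (at_top \<times>\<^sub>F sequentially)"
  proof (rule always_eventually, clarify)
    fix k N
    show "norm (a k N) \<le> norm (tm x (int k)) * BB x"
      unfolding a_def using fN_bound[of N "int k"] BB_nonneg by auto
  qed
  have summ: "summable (\<lambda>k. norm (tm x (int k)) * BB x)"
    by (intro summable_mult2 summ_tm_pos)
  have T: "((\<lambda>N. suminf (\<lambda>k. a k N)) \<longlongrightarrow> (\<Sum>k. tm x (int k) / LL x)) sequentially"
    using tannerys_theorem[OF lim bound summ] by simp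
  have "\<And>N. suminf (\<lambda>k. a k N) = (\<Sum>k\<in>{..N}. fN x N (int k))"
    by (subst suminf_finite[of "{..N}"]) (auto simp: a_def)
  thus ?thesis using T by simp
qed

lemma neg_lim: "(\<lambda>N. \<Sum>k<N. fN x N (- int (Suc k))) \<longlonglongrightarrow> (\<Sum>k. tm x (- int (Suc k)) / LL x)"
proof -
  define a where "a = (\<lambda>k N. if k < N then fN x N (- int (Suc k)) else 0)"
  have lim: "\<And>k. ((\<lambda>N. a k N) \<longlongrightarrow> tm x (- int (Suc k)) / LL x) sequentially"
  proof -
    fix k
    have "((\<lambda>N. tm x (- int (Suc k)) / Wt x N (- int (Suc k))) \<longlongrightarrow> tm x (- int (Suc k)) / LL x) sequentially"
      by (intro tendsto_divide tendsto_const Wt_neg_lim[OF x0 x1] LL_nz[OF x0 x1])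
    moreover have "eventually (\<lambda>N. tm x (- int (Suc k)) / Wt x N (- int (Suc k)) = a k N) sequentially"
      using eventually_gt_at_top[of k] by eventually_elim (simp add: a_def fN_def)
    ultimately show "((\<lambda>N. a k N) \<longlongrightarrow> tm x (- int (Suc k)) / LL x) sequentially"
      by (rule Lim_transform_eventually)
  qed
  have bound: "eventually (\<lambda>(k,N). norm (a k N) \<le> norm (tm x (- int (Suc k))) * BB x) (at_top \<times>\<^sub>F sequentially)"
  proof (rule always_eventually, clarify)
    fix k N
    show "norm (a k N) \<le> norm (tm x (- int (Suc k))) * BB x"
      unfolding a_def using fN_bound[of N "- int (Suc k)"] BB_nonneg by auto
  qed
  have summ: "summable (\<lambda>k. norm (tm x (- int (Suc k))) * BB x)"
    by (intro summable_mult2 summ_tm_neg)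
  have T: "((\<lambda>N. suminf (\<lambda>k. a k N)) \<longlongrightarrow> (\<Sum>k. tm x (- int (Suc k)) / LL x)) sequentially"
    using tannerys_theorem[OF lim bound summ] by simp
  have "\<And>N. suminf (\<lambda>k. a k N) = (\<Sum>k<N. fN x N (- int (Suc k)))"
    by (subst suminf_finite[of "{..<N}"]) (auto simp: a_def)
  thus ?thesis using T by simp
qed

end


lemma qpoch_inf_split:
  fixes Q :: complex assumes Q: "norm Q < 1"
  shows "qpoch_inf (Q^2) (Q^2) = qpoch_inf Q Q * qpoch_inf (-Q) Q"
proof -
  have nQ2: "norm (Q^2) < 1" using Q by (simp add: norm_power power_less_one_iff)
  have c1: "convergent_prod (\<lambda>j. 1 - Q*Q^j)"
    by (rule qpoch_conv[OF Q]) (rule fac_nz, use Q in auto)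
  have c2: "convergent_prod (\<lambda>j. 1 - (-Q)*Q^j)"
    by (rule qpoch_conv[OF Q]) (rule fac_nz, use Q in auto)
  have "qpoch_inf Q Q * qpoch_inf (-Q) Q = (\<Prod>j. (1 - Q*Q^j) * (1 - (-Q)*Q^j))"
    unfolding qpoch_inf_def by (rule prodinf_mult[OF c1 c2])
  also have "\<dots> = (\<Prod>j. 1 - Q^2*(Q^2)^j)"
    by (rule arg_cong[where f=prodinf], rule ext) (simp add: algebra_simps power2_eq_square power_mult_distrib)
  finally show ?thesis unfolding qpoch_inf_def by simp
qed

context
  fixes x :: complex
  assumes x0: "x \<noteq> 0" and x1: "norm x < 1"
begin

lemma rN_lim: "(\<lambda>N. rN x N) \<longlonglongrightarrow> qpoch_inf x (x^2) / qpoch_inf ((x^2)^2) ((x^2)^2)"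
proof -
  have sm: "strict_mono (\<lambda>N::nat. 2*N)" by (simp add: strict_mono_def)
  have nQ2: "norm ((x^2)^2) < 1" by (rule nQ2[OF x0 x1])
  have f2: "\<And>j. 1 - (x^2)^2*((x^2)^2)^j \<noteq> 0" by (rule fac_nz) (use nQ2 in auto)
  have l1: "(\<lambda>N. qpoch x (x^2) (2*N)) \<longlonglongrightarrow> qpoch_inf x (x^2)"
    using LIMSEQ_subseq_LIMSEQ[OF limx[OF x0 x1] sm] by (simp add: o_def)
  have l2: "(\<lambda>N. qpoch ((x^2)^2) ((x^2)^2) (2*N)) \<longlonglongrightarrow> qpoch_inf ((x^2)^2) ((x^2)^2)"
    using LIMSEQ_subseq_LIMSEQ[OF qpoch_LIMSEQ[OF nQ2 f2] sm] by (simp add: o_def)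
  show ?thesis unfolding rN_def
    by (intro tendsto_divide l1 l2 qpoch_inf_nz[OF nQ2 f2])
qed

lemma comb: "S0 (x^2) - x * S1 (x^2) + (2 * T0 (x^2) - 2 * x * T1 (x^2))
   = LL x * (qpoch_inf x (x^2) / qpoch_inf ((x^2)^2) ((x^2)^2))"
proof -
  have lim: "(\<lambda>N. rN x N) \<longlonglongrightarrow> (\<Sum>k. tm x (int k) / LL x) + (\<Sum>k. tm x (- int (Suc k)) / LL x)"
  proof -
    have "(\<lambda>N. (\<Sum>k\<in>{..N}. fN x N (int k)) + (\<Sum>k<N. fN x N (- int (Suc k)))) \<longlonglongrightarrow>
        (\<Sum>k. tm x (int k) / LL x) + (\<Sum>k. tm x (- int (Suc k)) / LL x)"
      by (intro tendsto_add pos_lim[OF x0 x1] neg_lim[OF x0 x1])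
    moreover have "\<And>N. (\<Sum>k\<in>{..N}. fN x N (int k)) + (\<Sum>k<N. fN x N (- int (Suc k))) = rN x N"
      using fin_id[OF x0 x1] sum_split_int by metis
    ultimately show ?thesis by simp
  qed
  have E: "(\<Sum>k. tm x (int k) / LL x) + (\<Sum>k. tm x (- int (Suc k)) / LL x)
        = qpoch_inf x (x^2) / qpoch_inf ((x^2)^2) ((x^2)^2)"
    using LIMSEQ_unique[OF lim rN_lim] .
  have sp: "summable (\<lambda>k. tm x (int k))" by (rule summable_norm_cancel[OF summ_tm_pos[OF x0 x1]])
  have sn: "summable (\<lambda>k. tm x (- int (Suc k)))" by (rule summable_norm_cancel[OF summ_tm_neg[OF x0 x1]])
  have s0: "summable (s0 x)" by (rule summable_norm_cancel[OF summ_S0[OF x0 x1]])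
  have s1: "summable (s1 x)" by (rule summable_norm_cancel[OF summ_S1[OF x0 x1]])
  have t0: "summable (t0 x)" by (rule summable_norm_cancel[OF summ_T0[OF x0 x1]])
  have t1: "summable (t1 x)" by (rule summable_norm_cancel[OF summ_T1[OF x0 x1]])
  have P: "(\<Sum>k. tm x (int k)) = S0 (x^2) - x * S1 (x^2)"
  proof -
    have "(\<Sum>k. tm x (int k)) = (\<Sum>k. s0 x k - x * s1 x k)"
      by (simp only: tm_pos[OF x0 x1])
    also have "\<dots> = (\<Sum>k. s0 x k) - (\<Sum>k. x * s1 x k)"
      by (rule suminf_diff[symmetric, OF s0 summable_mult[OF s1]])
    also have "(\<Sum>k. x * s1 x k) = x * (\<Sum>k. s1 x k)" by (rule suminf_mult[OF s1])
    finally show ?thesis unfolding S0_def S1_def .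
  qed
  have N: "(\<Sum>k. tm x (- int (Suc k))) = 2 * T0 (x^2) - 2 * x * T1 (x^2)"
  proof -
    have "(\<Sum>k. tm x (- int (Suc k))) = (\<Sum>k. 2 * t0 x k - 2 * x * t1 x k)"
      by (simp only: tm_neg[OF x0 x1])
    also have "\<dots> = (\<Sum>k. 2 * t0 x k) - (\<Sum>k. 2 * x * t1 x k)"
      by (rule suminf_diff[symmetric, OF summable_mult[OF t0] summable_mult[OF t1]])
    also have "(\<Sum>k. 2 * t0 x k) = 2 * (\<Sum>k. t0 x k)" by (rule suminf_mult[OF t0])
    also have "(\<Sum>k. 2 * x * t1 x k) = 2 * x * (\<Sum>k. t1 x k)" by (rule suminf_mult[OF t1])
    finally show ?thesis unfolding T0_def T1_def .
  qed
  have "(\<Sum>k. tm x (int k) / LL x) + (\<Sum>k. tm x (- int (Suc k)) / LL x)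
      = (S0 (x^2) - x * S1 (x^2) + (2 * T0 (x^2) - 2 * x * T1 (x^2))) / LL x"
    unfolding suminf_divide[OF sp] suminf_divide[OF sn] P N by (simp only: add_divide_distrib)
  with E have "(S0 (x^2) - x * S1 (x^2) + (2 * T0 (x^2) - 2 * x * T1 (x^2))) / LL x
       = qpoch_inf x (x^2) / qpoch_inf ((x^2)^2) ((x^2)^2)" by simp
  thus ?thesis using LL_nz[OF x0 x1] by (simp add: field_simps)
qed

lemma comb2: "(S0 (x^2) + 2 * T0 (x^2)) - x * (S1 (x^2) + 2 * T1 (x^2))
   = qpoch_inf (x^2) (x^2) * qpoch_inf x (x^2) ^ 3 / qpoch_inf (-(x^2)) (x^2)"
proof -
  have nQ: "norm (x^2) < 1" by (rule nQ[OF x0 x1])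
  have sp: "qpoch_inf ((x^2)^2) ((x^2)^2) = qpoch_inf (x^2) (x^2) * qpoch_inf (-(x^2)) (x^2)"
    by (rule qpoch_inf_split[OF nQ])
  have n1: "qpoch_inf (x^2) (x^2) \<noteq> 0" by (rule qpoch_inf_nz[OF nQ facQ[OF x0 x1]])
  have f3: "\<And>j. 1 - (-(x^2))*(x^2)^j \<noteq> 0" by (rule fac_nz) (use nQ in auto)
  have n2: "qpoch_inf (-(x^2)) (x^2) \<noteq> 0" by (rule qpoch_inf_nz[OF nQ f3])
  have "(S0 (x^2) + 2 * T0 (x^2)) - x * (S1 (x^2) + 2 * T1 (x^2)) = S0 (x^2) - x * S1 (x^2) + (2 * T0 (x^2) - 2 * x * T1 (x^2))"
    by (simp add: algebra_simps)
  also have "\<dots> = LL x * (qpoch_inf x (x^2) / qpoch_inf ((x^2)^2) ((x^2)^2))" by (rule comb)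
  also have "\<dots> = qpoch_inf (x^2) (x^2) * qpoch_inf x (x^2) ^ 3 / qpoch_inf (-(x^2)) (x^2)"
    unfolding sp LL_def[OF x0 x1] using n1 n2 by (simp add: field_simps power3_eq_cube)
  finally show ?thesis .
qed

end


lemma S0_zero: "S0 0 = 1"
proof -
  have "S0 0 = (\<Sum>n\<in>{0}. (0::complex) ^ (n^2) * qpoch (-0) (0^2) n / qpoch (-(0^2)) (0^2) n)"
    unfolding S0_def by (rule suminf_finite) auto
  thus ?thesis by simp
qed

lemma T0_zero: "T0 0 = 0"
  unfolding T0_def by simp

lemma qpoch_inf_zero: "qpoch_inf 0 0 = 1"
  unfolding qpoch_inf_def by simp

theorem mainTheorem13:
  fixes q :: complex
  assumes "norm q < 1"
  shows "S0 (q^2) + 2 * T0 (q^2) =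
           qpoch_inf (q^2) (q^2) * (qpoch_inf q (q^2) ^ 3 + qpoch_inf (-q) (q^2) ^ 3)
             / (2 * qpoch_inf (-(q^2)) (q^2))
       \<and> (q \<noteq> 0 \<longrightarrow>
          S1 (q^2) + 2 * T1 (q^2) =
           qpoch_inf (q^2) (q^2) * (qpoch_inf (-q) (q^2) ^ 3 - qpoch_inf q (q^2) ^ 3)
             / (2 * q * qpoch_inf (-(q^2)) (q^2)))"
proof (cases "q = 0")
  case True
  thus ?thesis by (simp add: S0_zero T0_zero qpoch_inf_zero)
next
  case False
  have q1: "norm (-q) < 1" using assms by simp
  have mq: "-q \<noteq> 0" using False by simp
  have sq: "(-q)^2 = q^2" by simp
  define E where "E = S0 (q^2) + 2 * T0 (q^2)"
  define Od where "Od = S1 (q^2) + 2 * T1 (q^2)"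
  define Z where "Z = qpoch_inf (q^2) (q^2)"
  define c where "c = qpoch_inf (-(q^2)) (q^2)"
  define a where "a = qpoch_inf q (q^2)"
  define b where "b = qpoch_inf (-q) (q^2)"
  have A: "E - q * Od = Z * a^3 / c"
    unfolding E_def Od_def Z_def c_def a_def by (rule comb2[OF False assms])
  have B: "E - (-q) * Od = Z * b^3 / c"
    using comb2[OF mq q1] unfolding sq E_def Od_def Z_def c_def b_def .
  have nQ: "norm (q^2) < 1" using assms by (simp add: norm_power power_less_one_iff)
  have f3: "\<And>j. 1 - (-(q^2))*(q^2)^j \<noteq> 0" by (rule fac_nz) (use nQ in auto)
  have c0: "c \<noteq> 0" unfolding c_def by (rule qpoch_inf_nz[OF nQ f3])
  have E: "E = Z * (a^3 + b^3) / (2 * c)"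
  proof -
    have "2 * E = (E - q * Od) + (E - (-q) * Od)" by (simp add: algebra_simps)
    hence "2 * E = Z * a^3 / c + Z * b^3 / c" unfolding A B .
    thus ?thesis using c0 by (simp add: field_simps)
  qed
  have Od: "Od = Z * (b^3 - a^3) / (2 * q * c)"
  proof -
    have "2 * q * Od = (E - (-q) * Od) - (E - q * Od)" by (simp add: algebra_simps)
    hence "2 * q * Od = Z * b^3 / c - Z * a^3 / c" unfolding A B .
    thus ?thesis using c0 False by (simp add: field_simps)
  qed
  show ?thesis using E Od unfolding E_def Od_def Z_def c_def a_def b_def by simp
qed


end
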